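(* Let $\mathcal{H}$ be a complex separable Hilbert space and let $A$ be a bounded, positive, injective operator on $\mathcal{H}$ that is Hankel with respect to an isometry $V$, i.e. $V^*A = AV$. Then the Wold decomposition of $V$ has the form $V = V_0 \oplus J$ on $\mathcal{H} = \mathcal{H}_0 \oplus \mathcal{H}'$, where $V_0$ is a pure isometry on $\mathcal{H}_0$ and $J$ is a self-adjoint unitary on $\mathcal{H}' = \mathcal{H}'_+ \oplus \mathcal{H}'_-$ with $Jh = h$ for $h \in \mathcal{H}'_+$ and $Jh = -h$ for $h \in \mathcal{H}'_-$. The subspaces $\mathcal{H}_0$, $\mathcal{H}'_+$ and $\mathcal{H}'_-$ are each invariant under $A$. If in addition $AV > 0$, then $\mathcal{H}'_- = \{0\}$ and $J = I$.
   Context: An operator $T$ is positive, written $T>0$, if $\langle Tx,x\rangle \ge 0$ for all $x$ in its domain and $T$ is injective. A pure isometry is one unitarily equivalent to the unilateral shift $M_z$ on $H^2 \otimes \mathbb{C}^n$ for some $n$. The Wold decomposition writes an isometry as the orthogonal direct sum of its pure part and a unitary part. *)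

theory Defs
  imports "HOL-Analysis.Analysis"
begin

text \<open>A complex Hilbert space is modelled on a carrier type 'a (an additive group)
  with an explicit complex scalar multiplication scal and a complex inner product ip,
  linear in the first argument and conjugate-linear in the second.\<close>

definition hnorm :: "('a \<Rightarrow> 'a \<Rightarrow> complex) \<Rightarrow> 'a \<Rightarrow> real" where
  "hnorm ip x = sqrt (Re (ip x x))"

definition complex_separable_hilbert ::
  "(complex \<Rightarrow> 'a::ab_group_add \<Rightarrow> 'a) \<Rightarrow> ('a \<Rightarrow> 'a \<Rightarrow> complex) \<Rightarrow> bool" where
  "complex_separable_hilbert scal ip \<longleftrightarrow>
     (\<forall>a x y. scal a (x + y) = scal a x + scal a y) \<and>
     (\<forall>a b x. scal (a + b) x = scal a x + scal b x) \<and>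
     (\<forall>a b x. scal a (scal b x) = scal (a * b) x) \<and>
     (\<forall>x. scal 1 x = x) \<and>
     (\<forall>x y. ip x y = cnj (ip y x)) \<and>
     (\<forall>x y z. ip (x + y) z = ip x z + ip y z) \<and>
     (\<forall>a x y. ip (scal a x) y = a * ip x y) \<and>
     (\<forall>x. 0 \<le> Re (ip x x)) \<and>
     (\<forall>x. ip x x = 0 \<longrightarrow> x = 0) \<and>
     \<comment> \<open>completeness w.r.t. the induced norm\<close>
     (\<forall>s::nat \<Rightarrow> 'a. (\<forall>e>0. \<exists>N. \<forall>m\<ge>N. \<forall>n\<ge>N. hnorm ip (s m - s n) < e) \<longrightarrow>
        (\<exists>l. \<forall>e>0. \<exists>N. \<forall>n\<ge>N. hnorm ip (s n - l) < e)) \<and>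
     \<comment> \<open>separability: a countable dense subset\<close>
     (\<exists>D. countable D \<and> (\<forall>x. \<forall>e>0. \<exists>d\<in>D. hnorm ip (x - d) < e))"

definition bounded_op ::
  "(complex \<Rightarrow> 'a::ab_group_add \<Rightarrow> 'a) \<Rightarrow> ('a \<Rightarrow> 'a \<Rightarrow> complex) \<Rightarrow> ('a \<Rightarrow> 'a) \<Rightarrow> bool" where
  "bounded_op scal ip T \<longleftrightarrow>
     (\<forall>x y. T (x + y) = T x + T y) \<and> (\<forall>a x. T (scal a x) = scal a (T x)) \<and>
     (\<exists>K. \<forall>x. hnorm ip (T x) \<le> K * hnorm ip x)"

definition isometry_op ::
  "(complex \<Rightarrow> 'a::ab_group_add \<Rightarrow> 'a) \<Rightarrow> ('a \<Rightarrow> 'a \<Rightarrow> complex) \<Rightarrow> ('a \<Rightarrow> 'a) \<Rightarrow> bool" where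
  "isometry_op scal ip V \<longleftrightarrow> bounded_op scal ip V \<and> (\<forall>x. hnorm ip (V x) = hnorm ip x)"

definition adjoint_op :: "('a \<Rightarrow> 'a \<Rightarrow> complex) \<Rightarrow> ('a \<Rightarrow> 'a) \<Rightarrow> 'a \<Rightarrow> 'a" where
  "adjoint_op ip T y = (THE z. \<forall>x. ip (T x) y = ip x z)"

definition positive_op :: "('a \<Rightarrow> 'a \<Rightarrow> complex) \<Rightarrow> ('a \<Rightarrow> 'a) \<Rightarrow> bool" where
  "positive_op ip T \<longleftrightarrow> (\<forall>x. Im (ip (T x) x) = 0 \<and> 0 \<le> Re (ip (T x) x)) \<and> inj T"

definition orth_compl :: "('a \<Rightarrow> 'a \<Rightarrow> complex) \<Rightarrow> 'a set \<Rightarrow> 'a set" where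
  "orth_compl ip S = {x. \<forall>y\<in>S. ip x y = 0}"

definition wold_unitary_part :: "('a \<Rightarrow> 'a) \<Rightarrow> 'a set" where
  "wold_unitary_part V = (\<Inter>n. range (V ^^ n))"

definition wold_pure_part :: "('a \<Rightarrow> 'a \<Rightarrow> complex) \<Rightarrow> ('a \<Rightarrow> 'a) \<Rightarrow> 'a set" where
  "wold_pure_part ip V = orth_compl ip (wold_unitary_part V)"

definition pure_on :: "('a::zero \<Rightarrow> 'a) \<Rightarrow> 'a set \<Rightarrow> bool" where
  "pure_on V M \<longleftrightarrow> V ` M \<subseteq> M \<and> (\<Inter>n. (V ^^ n) ` M) = {0}"

end

theory Submission
  imports Defs
begin

lemma ratio_mono:
  fixes b :: "nat \<Rightarrow> real"
  assumes pos: "\<And>j. b j > 0" and lc: "\<And>j. (b (Suc j))^2 \<le> b j * b (Suc (Suc j))"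
    and ij: "i \<le> j"
  shows "b (Suc i) / b i \<le> b (Suc j) / b j"
proof (rule lift_Suc_mono_le[OF _ ij])
  fix n
  have "b (Suc n) * b (Suc n) \<le> b n * b (Suc (Suc n))" using lc[of n] by (simp add: power2_eq_square)
  thus "b (Suc n) / b n \<le> b (Suc (Suc n)) / b (Suc n)"
    using pos[of n] pos[of "Suc n"] by (simp add: divide_simps mult.commute)
qed

lemma seq_noninc:
  fixes b :: "nat \<Rightarrow> real"
  assumes pos: "\<And>j. b j > 0" and lc: "\<And>j. (b (Suc j))^2 \<le> b j * b (Suc (Suc j))"
    and bd: "\<And>j. b j \<le> M"
  shows "b (Suc k) \<le> b k"
proof (rule ccontr)
  assume "\<not> b (Suc k) \<le> b k"
  define r where "r = b (Suc k) / b k"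
  have r1: "1 < r" using \<open>\<not> b (Suc k) \<le> b k\<close> pos[of k] unfolding r_def by (simp add: divide_simps)
  have grow: "r^n * b k \<le> b (k + n)" for n
  proof (induction n)
    case 0 thus ?case by simp
  next
    case (Suc n)
    have "r \<le> b (Suc (k+n)) / b (k+n)" unfolding r_def by (rule ratio_mono[of b, OF pos lc]) simp
    hence "r * b (k+n) \<le> b (Suc (k+n))" using pos[of "k+n"] by (simp add: divide_simps)
    moreover have "r * (r^n * b k) \<le> r * b (k+n)" using Suc r1 by simp
    ultimately show ?case by simp
  qed
  obtain n where "M / b k < r^n" using real_arch_pow[OF r1] by blast
  hence "M < r^n * b k" using pos[of k] by (simp add: divide_simps)
  thus False using grow[of n] bd[of "k+n"] by simp
qed

lemma seq_decay:
  fixes b :: "nat \<Rightarrow> real"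
  assumes pos: "\<And>j. b j > 0" and lc: "\<And>j. (b (Suc j))^2 \<le> b j * b (Suc (Suc j))"
  shows "m \<le> n \<Longrightarrow> b m \<le> (b (Suc n) / b n)^m * b 0"
proof (induction m)
  case 0 thus ?case by simp
next
  case (Suc m)
  have "b (Suc m) / b m \<le> b (Suc n) / b n" using Suc.prems by (intro ratio_mono[of b, OF pos lc]) simp
  hence "b (Suc m) \<le> (b (Suc n) / b n) * b m" using pos_divide_le_eq[OF pos[of m]] by (metis mult.commute)
  also have "\<dots> \<le> (b (Suc n) / b n) * ((b (Suc n) / b n)^m * b 0)"
    using Suc pos[of n] pos[of "Suc n"] by (intro mult_left_mono) simp_all
  finally show ?case by simp
qed


lemma quad_real:
  fixes A C D :: real
  assumes "\<forall>t. 0 \<le> A - 2*t*C + t*t*C*D" "0 \<le> C" "0 \<le> D" "0 \<le> A"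
  shows "C \<le> A * D"
proof (cases "D = 0")
  case True
  show ?thesis
  proof (rule ccontr)
    assume "\<not> C \<le> A * D"
    hence "C > 0" using True by simp
    have "0 \<le> A - 2*((A+1)/C)*C" using assms(1)[rule_format, of "(A+1)/C"] True by simp
    also have "\<dots> = A - 2*(A+1)" using \<open>C>0\<close> by simp
    finally show False using assms(4) by simp
  qed
next
  case False
  hence D: "D > 0" using assms(3) by simp
  have "0 \<le> A - 2*(1/D)*C + (1/D)*(1/D)*C*D" using assms(1)[rule_format, of "1/D"] .
  also have "\<dots> = A - C/D" using D by (simp add: field_simps)
  finally have "C/D \<le> A" by simp
  thus ?thesis using D by (simp add: field_simps)
qed

lemma cs_generic:
  fixes F :: "'a::ab_group_add \<Rightarrow> 'a \<Rightarrow> complex" and scal :: "complex \<Rightarrow> 'a \<Rightarrow> 'a"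
  assumes add: "\<forall>x y z. F (x+y) z = F x z + F y z"
    and sc: "\<forall>a x y. F (scal a x) y = a * F x y"
    and herm: "\<forall>x y. F x y = cnj (F y x)"
    and pos: "\<forall>x. 0 \<le> Re (F x x)"
  shows "(cmod (F x y))^2 \<le> Re (F x x) * Re (F y y)"
proof -
  have neg1: "F (-u) z = - F u z" for u z
  proof -
    have "F (u + -u) z = F u z + F (-u) z" using add by blast
    moreover have "F 0 z = 0"
    proof -
      have "F (0+0) z = F 0 z + F 0 z" using add by blast
      thus ?thesis by simp
    qed
    ultimately show ?thesis by (metis add.commute add_right_cancel add.right_inverse eq_neg_iff_add_eq_0)
  qed
  have sub1: "F (u - w) z = F u z - F w z" for u w z
    using add[rule_format, of u "-w" z] neg1[of w z] by simp
  have sub2: "F z (u - w) = F z u - F z w" for u w z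
    using herm sub1 by (metis complex_cnj_diff)
  have sc2: "F z (scal a u) = cnj a * F z u" for a u z
    using herm sc by (metis complex_cnj_mult complex_cnj_cnj)
  have real: "Im (F u u) = 0" for u using arg_cong[OF herm[rule_format, of u u], of Im] by simp
  define c where "c = F x y"
  have key: "0 \<le> Re (F x x) - 2*t*(cmod c)^2 + t*t*(cmod c)^2*Re (F y y)" for t :: real
  proof -
    define s where "s = complex_of_real t * c"
    have e: "F (x - scal s y) (x - scal s y) = F x x - cnj s * F x y - s * F y x + s * cnj s * F y y"
      by (simp only: sub1 sub2 sc sc2) (simp add: algebra_simps)
    have yx: "F y x = cnj c" unfolding c_def by (rule herm[rule_format])
    have xy: "F x y = c" using c_def by simp
    have e2: "F (x - scal s y) (x - scal s y) = F x x - 2 * t * (c * cnj c) + t*t*(c * cnj c) * F y y"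
      by (simp only: e yx xy) (simp add: s_def algebra_simps)
    have cc: "c * cnj c = complex_of_real ((cmod c)^2)" by (metis complex_norm_square)
    have "Re (F (x - scal s y) (x - scal s y)) = Re (F x x) - 2*t*(cmod c)^2 + t*t*(cmod c)^2*Re (F y y)"
      unfolding e2 cc using real[of y] by simp
    thus ?thesis using pos by metis
  qed
  show ?thesis unfolding c_def[symmetric]
    using quad_real[of "Re (F x x)" "(cmod c)^2" "Re (F y y)"] key pos by simp
qed


locale hs =
  fixes scal :: "complex \<Rightarrow> 'a::ab_group_add \<Rightarrow> 'a" and ip :: "'a \<Rightarrow> 'a \<Rightarrow> complex"
  assumes H: "complex_separable_hilbert scal ip"
begin

lemma sadd: "scal a (x + y) = scal a x + scal a y" using H unfolding complex_separable_hilbert_def by (elim conjE) (rule allE, assumption, blast)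
lemma saddl: "scal (a + b) x = scal a x + scal b x" using H unfolding complex_separable_hilbert_def by (elim conjE) (rule allE, assumption, blast)
lemma sassoc: "scal a (scal b x) = scal (a * b) x" using H unfolding complex_separable_hilbert_def by (elim conjE) (rule allE, assumption, blast)
lemma sone[simp]: "scal 1 x = x" using H unfolding complex_separable_hilbert_def by (elim conjE) (rule allE, assumption, blast)
lemma herm: "ip x y = cnj (ip y x)" using H unfolding complex_separable_hilbert_def by (elim conjE) (rule allE, assumption, blast)
lemma ipadd: "ip (x + y) z = ip x z + ip y z" using H unfolding complex_separable_hilbert_def by (elim conjE) (rule allE, assumption, blast)
lemma ipsc: "ip (scal a x) y = a * ip x y" using H unfolding complex_separable_hilbert_def by (elim conjE) (rule allE, assumption, blast)
lemma ippos: "0 \<le> Re (ip x x)" using H unfolding complex_separable_hilbert_def by (elim conjE) (rule allE, assumption, blast)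
lemma ipdef: "ip x x = 0 \<Longrightarrow> x = 0" using H unfolding complex_separable_hilbert_def by (elim conjE) (rule allE, assumption, blast)
lemma complete:
  fixes s :: "nat \<Rightarrow> 'a"
  assumes "\<forall>e>0. \<exists>N. \<forall>m\<ge>N. \<forall>n\<ge>N. hnorm ip (s m - s n) < e"
  shows "\<exists>l. \<forall>e>0. \<exists>N. \<forall>n\<ge>N. hnorm ip (s n - l) < e"
proof -
  have "\<forall>s::nat\<Rightarrow>'a. (\<forall>e>0. \<exists>N. \<forall>m\<ge>N. \<forall>n\<ge>N. hnorm ip (s m - s n) < e) \<longrightarrow>
        (\<exists>l. \<forall>e>0. \<exists>N. \<forall>n\<ge>N. hnorm ip (s n - l) < e)"
    using H unfolding complex_separable_hilbert_def by (elim conjE) assumption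
  thus ?thesis using assms by blast
qed

lemma s0[simp]: "scal 0 x = 0"
proof -
  have "scal (0+0) x = scal 0 x + scal 0 x" by (rule saddl)
  thus ?thesis by simp
qed
lemma sz[simp]: "scal a 0 = 0"
proof -
  have "scal a (0+0) = scal a 0 + scal a 0" by (rule sadd)
  thus ?thesis by simp
qed
lemma sneg: "scal a (- x) = - scal a x"
  using sadd[of a x "-x"] minus_unique[of "scal a x" "scal a (-x)"] by simp
lemma sdiff: "scal a (x - y) = scal a x - scal a y"
  using sadd[of a x "-y"] sneg by simp
lemma sm1: "scal (-1) x = - x"
  using saddl[of 1 "-1" x] by (simp add: eq_neg_iff_add_eq_0 add.commute)
lemma s2: "scal 2 x = x + x"
  using saddl[of 1 1 x] by (simp add: one_add_one)

lemma ip0l[simp]: "ip 0 y = 0" using ipadd[of 0 0 y] by simp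
lemma ip0r[simp]: "ip y 0 = 0" using herm[of y 0] by simp
lemma ipneg: "ip (-x) y = - ip x y" using ipadd[of x "-x" y] minus_unique[of "ip x y" "ip (-x) y"] by simp
lemma ipdiff: "ip (x - y) z = ip x z - ip y z" using ipadd[of x "-y" z] ipneg by simp
lemma ipadd2: "ip z (x + y) = ip z x + ip z y" by (metis herm ipadd complex_cnj_add)
lemma ipneg2: "ip z (-x) = - ip z x" by (metis herm ipneg complex_cnj_minus)
lemma ipdiff2: "ip z (x - y) = ip z x - ip z y" by (metis herm ipdiff complex_cnj_diff)
lemma ipsc2: "ip z (scal a y) = cnj a * ip z y" by (metis herm ipsc complex_cnj_mult)

lemma ipreal: "Im (ip x x) = 0" using arg_cong[OF herm[of x x], of Im] by simp
lemma ip_of_real: "ip x x = complex_of_real (Re (ip x x))"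
  using ipreal by (simp add: complex_eq_iff)

lemma cs2: "(cmod (ip x y))^2 \<le> Re (ip x x) * Re (ip y y)"
  apply (rule cs_generic[where scal=scal])
     apply (simp add: ipadd)
    apply (simp add: ipsc)
   apply (metis herm)
  apply (simp add: ippos)
  done

lemma hn_nonneg[simp]: "0 \<le> hnorm ip x" unfolding hnorm_def by (simp add: ippos)
lemma hn_sq: "(hnorm ip x)^2 = Re (ip x x)" unfolding hnorm_def using ippos[of x] by simp
lemma hn_zero_iff[simp]: "hnorm ip x = 0 \<longleftrightarrow> x = 0"
proof
  assume "hnorm ip x = 0"
  hence "Re (ip x x) = 0" using hn_sq[of x] by simp
  hence "ip x x = 0" using ip_of_real[of x] by simp
  thus "x = 0" by (rule ipdef)
qed (simp add: hnorm_def)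

lemma cs: "cmod (ip x y) \<le> hnorm ip x * hnorm ip y"
proof -
  have "(cmod (ip x y))^2 \<le> (hnorm ip x * hnorm ip y)^2"
    using cs2[of x y] by (simp add: power_mult_distrib hn_sq)
  thus ?thesis by (rule power2_le_imp_le) simp
qed

lemma nsq_add: "Re (ip (x+y) (x+y)) = Re (ip x x) + Re (ip y y) + 2 * Re (ip x y)"
proof -
  have "Re (ip y x) = Re (ip x y)" using herm[of y x] by simp
  thus ?thesis by (simp add: ipadd ipadd2)
qed
lemma nsq_diff: "Re (ip (x-y) (x-y)) = Re (ip x x) + Re (ip y y) - 2 * Re (ip x y)"
proof -
  have "Re (ip y x) = Re (ip x y)" using herm[of y x] by simp
  thus ?thesis by (simp add: ipdiff ipdiff2)
qed

lemma tri: "hnorm ip (x + y) \<le> hnorm ip x + hnorm ip y"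
proof -
  have "Re (ip x y) \<le> hnorm ip x * hnorm ip y" using cs[of x y] complex_Re_le_cmod order_trans by blast
  hence "(hnorm ip (x + y))^2 \<le> (hnorm ip x + hnorm ip y)^2"
    by (simp add: hn_sq nsq_add power2_sum)
  thus ?thesis by (rule power2_le_imp_le) simp
qed

lemma nsq_scal: "Re (ip (scal a x) (scal a x)) = (cmod a)^2 * Re (ip x x)"
proof -
  have "ip (scal a x) (scal a x) = (a * cnj a) * ip x x" by (simp add: ipsc ipsc2)
  also have "\<dots> = complex_of_real ((cmod a)^2) * ip x x" by (metis complex_norm_square)
  finally show ?thesis by simp
qed

lemma hn_scal: "hnorm ip (scal a x) = cmod a * hnorm ip x"
proof -
  have "(hnorm ip (scal a x))^2 = (cmod a * hnorm ip x)^2"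
    unfolding hn_sq power_mult_distrib nsq_scal by simp
  thus ?thesis by (rule power2_eq_imp_eq) simp_all
qed

lemma hn_neg: "hnorm ip (- x) = hnorm ip x"
  using hn_scal[of "-1" x] sm1 by simp
lemma hn_comm: "hnorm ip (x - y) = hnorm ip (y - x)"
  using hn_neg[of "x - y"] by simp
lemma tri_diff: "hnorm ip (x - z) \<le> hnorm ip (x - y) + hnorm ip (y - z)"
  using tri[of "x - y" "y - z"] by simp

end


context hs begin

definition conv :: "(nat \<Rightarrow> 'a) \<Rightarrow> 'a \<Rightarrow> bool" where
  "conv s l \<longleftrightarrow> (\<lambda>n. hnorm ip (s n - l)) \<longlonglongrightarrow> 0"
definition closedH :: "'a set \<Rightarrow> bool" where
  "closedH M \<longleftrightarrow> (\<forall>s l. (\<forall>n. s n \<in> M) \<longrightarrow> conv s l \<longrightarrow> l \<in> M)"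
definition subsp :: "'a set \<Rightarrow> bool" where
  "subsp M \<longleftrightarrow> 0 \<in> M \<and> (\<forall>x\<in>M. \<forall>y\<in>M. x + y \<in> M) \<and> (\<forall>a. \<forall>x\<in>M. scal a x \<in> M)"

lemma conv_iff: "conv s l \<longleftrightarrow> (\<forall>e>0. \<exists>N. \<forall>n\<ge>N. hnorm ip (s n - l) < e)"
  unfolding conv_def LIMSEQ_iff by simp

lemma cauchy_conv:
  fixes s :: "nat \<Rightarrow> 'a"
  assumes "\<forall>e>0. \<exists>N. \<forall>m\<ge>N. \<forall>n\<ge>N. hnorm ip (s m - s n) < e"
  shows "\<exists>l. conv s l"
  using complete[OF assms] conv_iff by blast

lemma conv_unique: assumes "conv s l" "conv s l'" shows "l = l'"
proof -
  have t: "(\<lambda>n. hnorm ip (s n - l) + hnorm ip (s n - l')) \<longlonglongrightarrow> 0 + 0"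
    using assms unfolding conv_def by (rule tendsto_add)
  have "hnorm ip (l - l') \<le> hnorm ip (s n - l) + hnorm ip (s n - l')" for n
    using tri_diff[of l l' "s n"] hn_comm[of l "s n"] by linarith
  hence "hnorm ip (l - l') \<le> 0 + 0" using LIMSEQ_le_const[OF t] by blast
  thus ?thesis using hn_nonneg[of "l - l'"] by simp
qed

lemma subsp_diff: "subsp M \<Longrightarrow> x \<in> M \<Longrightarrow> y \<in> M \<Longrightarrow> x - y \<in> M"
  unfolding subsp_def using sm1[of y] by (metis diff_conv_add_uminus)

lemma expand:
  fixes \<tau> :: real
  shows "Re (ip (u - scal (of_real \<tau> * ip u v) v) (u - scal (of_real \<tau> * ip u v) v))
     = Re (ip u u) - 2*\<tau>*(cmod (ip u v))^2 + \<tau>*\<tau>*(cmod (ip u v))^2 * Re (ip v v)"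
proof -
  define c where "c = ip u v"
  define s where "s = complex_of_real \<tau> * c"
  have yx: "ip v u = cnj c" unfolding c_def by (rule herm)
  have e: "ip (u - scal s v) (u - scal s v) = ip u u - cnj s * ip u v - s * ip v u + s * cnj s * ip v v"
    by (simp only: ipdiff ipdiff2 ipsc ipsc2) (simp add: algebra_simps)
  have e2: "ip (u - scal s v) (u - scal s v) = ip u u - 2 * \<tau> * (c * cnj c) + \<tau>*\<tau>*(c * cnj c) * ip v v"
    by (simp only: e yx c_def[symmetric]) (simp add: s_def algebra_simps)
  have cc: "c * cnj c = complex_of_real ((cmod c)^2)" by (metis complex_norm_square)
  have "Re (ip (u - scal s v) (u - scal s v)) = Re (ip u u) - 2*\<tau>*(cmod c)^2 + \<tau>*\<tau>*(cmod c)^2*Re (ip v v)"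
    unfolding e2 cc using ipreal[of v] by simp
  thus ?thesis unfolding s_def c_def .
qed

lemma proj:
  assumes sub: "subsp M" and cl: "closedH M"
  shows "\<exists>m\<in>M. \<forall>y\<in>M. ip (x - m) y = 0"
proof -
  define D where "D = (\<lambda>m. hnorm ip (x - m)) ` M"
  define d where "d = Inf D"
  have M0: "0 \<in> M" using sub unfolding subsp_def by blast
  have Dne: "D \<noteq> {}" using M0 D_def by blast
  have bdd: "bdd_below D" unfolding D_def by (rule bdd_belowI[of _ 0]) auto
  have dle: "d \<le> hnorm ip (x - m)" if "m \<in> M" for m
    unfolding d_def D_def using bdd D_def that by (auto intro: cInf_lower)
  have d0: "0 \<le> d" unfolding d_def using Dne by (rule cInf_greatest) (auto simp: D_def)
  have "\<exists>m. m \<in> M \<and> hnorm ip (x - m) < sqrt (d^2 + inverse (real (Suc n)))" for n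
  proof -
    have "d = sqrt (d^2)" using d0 by simp
    also have "\<dots> < sqrt (d^2 + inverse (real (Suc n)))" by (rule real_sqrt_less_mono) simp
    finally have "Inf D < sqrt (d^2 + inverse (real (Suc n)))" unfolding d_def .
    from cInf_lessD[OF Dne this] show ?thesis unfolding D_def by blast
  qed
  then obtain ms where ms: "\<And>n. ms n \<in> M" "\<And>n. hnorm ip (x - ms n) < sqrt (d^2 + inverse (real (Suc n)))"
    by metis
  have msq: "Re (ip (x - ms n) (x - ms n)) < d^2 + inverse (real (Suc n))" for n
  proof -
    have "(hnorm ip (x - ms n))^2 < (sqrt (d^2 + inverse (real (Suc n))))^2"
      using ms(2)[of n] by (rule power_strict_mono) auto
    thus ?thesis by (simp add: hn_sq)
  qed
  have half: "scal 2 (x - scal (1/2) (ms i + ms j)) = (x - ms i) + (x - ms j)" for i j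
  proof -
    have "scal 2 (x - scal (1/2) (ms i + ms j)) = scal 2 x - scal 1 (ms i + ms j)"
      by (simp add: sdiff sassoc)
    also have "\<dots> = (x + x) - (ms i + ms j)" by (simp add: s2)
    finally show ?thesis by (simp add: algebra_simps)
  qed
  have cb: "Re (ip (ms i - ms j) (ms i - ms j)) \<le> 2 * inverse (real (Suc i)) + 2 * inverse (real (Suc j))" for i j
  proof -
    define u where "u = x - ms i"
    define v where "v = x - ms j"
    have par: "Re (ip (u+v) (u+v)) + Re (ip (u-v) (u-v)) = 2 * Re (ip u u) + 2 * Re (ip v v)"
      using nsq_add[of u v] nsq_diff[of u v] by simp
    have uv: "u - v = ms j - ms i" unfolding u_def v_def by (simp add: algebra_simps)
    have mid: "scal (1/2) (ms i + ms j) \<in> M" using sub ms(1) unfolding subsp_def by blast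
    have "d \<le> hnorm ip (x - scal (1/2) (ms i + ms j))" using dle[OF mid] .
    hence "d^2 \<le> (hnorm ip (x - scal (1/2) (ms i + ms j)))^2" using d0 by (rule power_mono)
    hence "4 * d^2 \<le> Re (ip (u+v) (u+v))"
      unfolding u_def v_def half[symmetric] nsq_scal hn_sq by simp
    moreover have "Re (ip (ms i - ms j) (ms i - ms j)) = Re (ip (u-v) (u-v))"
      unfolding uv using hn_comm[of "ms j" "ms i"] hn_sq by metis
    ultimately show ?thesis using par msq[of i] msq[of j] unfolding u_def v_def by linarith
  qed
  have "\<forall>e>0. \<exists>N. \<forall>m\<ge>N. \<forall>n\<ge>N. hnorm ip (ms m - ms n) < e"
  proof (intro allI impI)
    fix e :: real assume e: "e > 0"
    obtain N where N: "inverse (real (Suc N)) < e^2 / 4" using reals_Archimedean[of "e^2/4"] e by auto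
    show "\<exists>N. \<forall>m\<ge>N. \<forall>n\<ge>N. hnorm ip (ms m - ms n) < e"
    proof (intro exI allI impI)
      fix m n assume mn: "N \<le> m" "N \<le> n"
      have "inverse (real (Suc m)) \<le> inverse (real (Suc N))" using mn by (simp add: field_simps)
      moreover have "inverse (real (Suc n)) \<le> inverse (real (Suc N))" using mn by (simp add: field_simps)
      ultimately have "(hnorm ip (ms m - ms n))^2 < e^2"
        using cb[of m n] N unfolding hn_sq by linarith
      thus "hnorm ip (ms m - ms n) < e" using power2_less_imp_less e by fastforce
    qed
  qed
  then obtain l where l: "conv ms l" using cauchy_conv by blast
  have lM: "l \<in> M" using cl ms(1) l unfolding closedH_def by blast
  have "(\<lambda>n. sqrt (d^2 + inverse (real (Suc n))) + hnorm ip (ms n - l)) \<longlonglongrightarrow> sqrt (d^2 + 0) + 0"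
    using l unfolding conv_def
    by (intro tendsto_add tendsto_real_sqrt tendsto_const LIMSEQ_inverse_real_of_nat) 
  hence lim: "(\<lambda>n. sqrt (d^2 + inverse (real (Suc n))) + hnorm ip (ms n - l)) \<longlonglongrightarrow> d" using d0 by simp
  have "hnorm ip (x - l) \<le> sqrt (d^2 + inverse (real (Suc n))) + hnorm ip (ms n - l)" for n
    using tri_diff[of x l "ms n"] ms(2)[of n] by linarith
  hence xl: "hnorm ip (x - l) \<le> d" using LIMSEQ_le_const[OF lim] by blast
  show ?thesis
  proof (intro bexI[OF _ lM] ballI)
    fix y assume yM: "y \<in> M"
    define r where "r = x - l"
    define c where "c = ip r y"
    have "0 \<le> 0 - 2*t*(cmod c)^2 + t*t*(cmod c)^2 * Re (ip y y)" for t :: real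
    proof -
      have mem: "l + scal (of_real t * c) y \<in> M" using sub lM yM unfolding subsp_def by blast
      have "hnorm ip r \<le> hnorm ip (x - (l + scal (of_real t * c) y))"
        using xl dle[OF mem] unfolding r_def by linarith
      hence "(hnorm ip r)^2 \<le> (hnorm ip (r - scal (of_real t * c) y))^2"
        unfolding r_def by (simp add: algebra_simps power_mono)
      thus ?thesis unfolding hn_sq c_def expand by simp
    qed
    hence "(cmod c)^2 \<le> 0 * Re (ip y y)"
      by (intro quad_real) (auto simp: ippos)
    thus "ip (x - l) y = 0" unfolding c_def r_def by simp
  qed
qed

end


context hs begin

lemma hn0[simp]: "hnorm ip 0 = 0" by simp

definition iso :: "('a \<Rightarrow> 'a) \<Rightarrow> bool" where
  "iso T \<longleftrightarrow> (\<forall>x y. T (x + y) = T x + T y) \<and> (\<forall>a x. T (scal a x) = scal a (T x)) \<and> (\<forall>x. hnorm ip (T x) = hnorm ip x)"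

lemma iso_add: "iso T \<Longrightarrow> T (x + y) = T x + T y" unfolding iso_def by blast
lemma iso_scal: "iso T \<Longrightarrow> T (scal a x) = scal a (T x)" unfolding iso_def by blast
lemma iso_norm: "iso T \<Longrightarrow> hnorm ip (T x) = hnorm ip x" unfolding iso_def by blast
lemma iso_0: "iso T \<Longrightarrow> T 0 = 0" using iso_add[of T 0 0] by simp
lemma iso_neg: "iso T \<Longrightarrow> T (- x) = - T x"
  using iso_add[of T x "-x"] iso_0[of T] minus_unique[of "T x" "T (-x)"] by simp
lemma iso_diff: "iso T \<Longrightarrow> T (x - y) = T x - T y"
  using iso_add[of T x "-y"] iso_neg[of T y] by simp
lemma iso_nsq: "iso T \<Longrightarrow> Re (ip (T x) (T x)) = Re (ip x x)"
  using iso_norm[of T x] hn_sq by metis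
lemma iso_inj: "iso T \<Longrightarrow> T x = T y \<Longrightarrow> x = y"
  using iso_diff[of T x y] iso_norm[of T "x - y"] by simp

lemma Im_as_Re: "Im (ip x y) = Re (ip x (scal \<i> y))"
  by (simp add: ipsc2)

lemma iso_ip: assumes "iso T" shows "ip (T x) (T y) = ip x y"
proof -
  have re: "Re (ip (T u) (T v)) = Re (ip u v)" for u v
  proof -
    have "Re (ip (T u + T v) (T u + T v)) = Re (ip (u+v) (u+v))"
      using iso_nsq[OF assms, of "u+v"] iso_add[OF assms, of u v] by simp
    thus ?thesis using nsq_add[of "T u" "T v"] nsq_add[of u v] iso_nsq[OF assms, of u] iso_nsq[OF assms, of v]
      by linarith
  qed
  have "Im (ip (T x) (T y)) = Im (ip x y)"
    unfolding Im_as_Re iso_scal[OF assms, symmetric] by (rule re)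
  thus ?thesis using re[of x y] by (simp add: complex_eq_iff)
qed

lemma iso_id: "iso id" unfolding iso_def by simp
lemma iso_comp: "iso S \<Longrightarrow> iso T \<Longrightarrow> iso (S \<circ> T)"
  unfolding iso_def by simp
lemma iso_pow: "iso T \<Longrightarrow> iso (T ^^ n)"
  by (induction n) (simp_all add: iso_id iso_comp)

lemma range_subsp: "iso T \<Longrightarrow> subsp (range T)"
  unfolding subsp_def
  by (metis (no_types, opaque_lifting) iso_0 iso_add iso_scal rangeE rangeI)

lemma range_closed: assumes T: "iso T" shows "closedH (range T)"
  unfolding closedH_def
proof (intro allI impI)
  fix s l assume sr: "\<forall>n. s n \<in> range T" and c: "conv s l"
  have "\<forall>n. \<exists>y. s n = T y" using sr by blast
  then obtain t where t: "\<And>n. s n = T (t n)" by metis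
  have dist: "hnorm ip (t m - t n) = hnorm ip (s m - s n)" for m n
    using iso_norm[OF T, of "t m - t n"] iso_diff[OF T] t by simp
  have "\<forall>e>0. \<exists>N. \<forall>m\<ge>N. \<forall>n\<ge>N. hnorm ip (t m - t n) < e"
  proof (intro allI impI)
    fix e :: real assume e: "e > 0"
    then obtain N where N: "\<forall>n\<ge>N. hnorm ip (s n - l) < e/2" using c unfolding conv_iff
      by (meson half_gt_zero)
    show "\<exists>N. \<forall>m\<ge>N. \<forall>n\<ge>N. hnorm ip (t m - t n) < e"
    proof (intro exI allI impI)
      fix m n assume "N \<le> m" "N \<le> n"
      hence "hnorm ip (s m - l) < e/2" "hnorm ip (s n - l) < e/2" using N by auto
      thus "hnorm ip (t m - t n) < e" unfolding dist
        using tri_diff[of "s m" "s n" l] hn_comm[of l "s n"] by linarith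
    qed
  qed
  then obtain l0 where l0: "conv t l0" using cauchy_conv by blast
  have "hnorm ip (s n - T l0) = hnorm ip (t n - l0)" for n
    by (metis iso_diff iso_norm T t)
  hence "conv s (T l0)" using l0 unfolding conv_def by simp
  hence "l = T l0" using conv_unique c by blast
  thus "l \<in> range T" by simp
qed

lemma adj_exists: assumes T: "iso T" shows "\<exists>z. \<forall>y. ip (T y) w = ip y z"
proof -
  obtain m where m: "m \<in> range T" "\<forall>z\<in>range T. ip (w - m) z = 0"
    using proj[OF range_subsp[OF T] range_closed[OF T]] by blast
  then obtain y0 where y0: "m = T y0" by blast
  have "ip (T y) w = ip y y0" for y
  proof -
    have "ip (w - m) (T y) = 0" using m by simp
    hence "ip (T y) (w - m) = 0" using herm[of "T y" "w - m"] by simp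
    hence "ip (T y) w = ip (T y) m" by (simp add: ipdiff2)
    thus ?thesis using iso_ip[OF T] y0 by simp
  qed
  thus ?thesis by blast
qed

lemma adj: assumes T: "iso T" shows "ip (T y) w = ip y (adjoint_op ip T w)"
proof -
  have ex1: "\<exists>!z. \<forall>y. ip (T y) w = ip y z"
  proof -
    obtain z where z: "\<forall>y. ip (T y) w = ip y z" using adj_exists[OF T] by blast
    have "z' = z" if "\<forall>y. ip (T y) w = ip y z'" for z'
    proof -
      have "ip y (z' - z) = 0" for y using z that by (simp add: ipdiff2)
      hence "ip (z' - z) (z' - z) = 0" by blast
      thus ?thesis using ipdef[of "z' - z"] by simp
    qed
    thus ?thesis using z by blast
  qed
  show ?thesis unfolding adjoint_op_def using theI'[OF ex1] by blast
qed

lemma iso_of: "isometry_op scal ip V \<Longrightarrow> iso V"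
  unfolding isometry_op_def bounded_op_def iso_def by blast

lemma closed_Inter: "(\<And>n. closedH (M n)) \<Longrightarrow> closedH (\<Inter>n. M n)"
  unfolding closedH_def by blast
lemma subsp_Inter: "(\<And>n. subsp (M n)) \<Longrightarrow> subsp (\<Inter>n. M n)"
  unfolding subsp_def by blast

end


locale hk = hs +
  fixes A V :: "'a \<Rightarrow> 'a"
  assumes A_bdd: "bounded_op scal ip A"
    and A_pos: "positive_op ip A"
    and V_iso: "isometry_op scal ip V"
    and hankel: "\<forall>x. adjoint_op ip V (A x) = A (V x)"
begin

lemma Vi: "iso V" using iso_of[OF V_iso] .
lemma A_add: "A (x + y) = A x + A y" using A_bdd unfolding bounded_op_def by blast
lemma A_scal: "A (scal a x) = scal a (A x)" using A_bdd unfolding bounded_op_def by blast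
lemma A_0: "A 0 = 0" using A_add[of 0 0] by simp
lemma A_neg: "A (- x) = - A x" using A_add[of x "-x"] A_0 minus_unique[of "A x" "A (-x)"] by simp
lemma A_diff: "A (x - y) = A x - A y" using A_add[of x "-y"] A_neg[of y] by simp
lemma A_im: "Im (ip (A x) x) = 0" using A_pos unfolding positive_op_def by blast
lemma A_re: "0 \<le> Re (ip (A x) x)" using A_pos unfolding positive_op_def by blast
lemma A_inj: "inj A" using A_pos unfolding positive_op_def by blast
lemma A_K: obtains K where "\<And>x. hnorm ip (A x) \<le> K * hnorm ip x"
  using A_bdd unfolding bounded_op_def by blast

lemma A_self: "ip (A x) y = ip x (A y)"
proof -
  define a where "a = ip (A x) y"
  define b where "b = ip (A y) x"
  have "Im (ip (A (x+y)) (x+y)) = 0" by (rule A_im)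
  hence 1: "Im a + Im b = 0"
    unfolding A_add ipadd ipadd2 a_def b_def using A_im[of x] A_im[of y] by simp
  have "Im (ip (A (x + scal \<i> y)) (x + scal \<i> y)) = 0" by (rule A_im)
  hence 2: "Re b - Re a = 0"
    unfolding A_add A_scal ipadd ipadd2 ipsc ipsc2 a_def b_def
    using A_im[of x] A_im[of y] by simp
  have "b = cnj a" using 1 2 by (simp add: complex_eq_iff)
  thus ?thesis unfolding a_def b_def by (metis herm complex_cnj_cnj)
qed

lemma B_cs: "(cmod (ip (A x) y))^2 \<le> Re (ip (A x) x) * Re (ip (A y) y)"
  apply (rule cs_generic[where scal=scal and F="\<lambda>x y. ip (A x) y"])
     apply (simp add: A_add ipadd)
    apply (simp add: A_scal ipsc)
   apply (metis A_self herm)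
  apply (simp add: A_re)
  done

lemma B_def0: assumes "Re (ip (A x) x) = 0" shows "x = 0"
proof -
  have "(cmod (ip (A x) y))^2 \<le> 0" for y using B_cs[of x y] assms by simp
  hence "ip (A x) (A x) = 0" by simp
  hence "A x = 0" by (rule ipdef)
  thus ?thesis using A_inj A_0 by (metis injD)
qed

lemma hk_adj: "ip (V y) (A x) = ip y (A (V x))"
  using adj[OF Vi, of y "A x"] hankel by simp

lemma symV: "ip (A (V u)) v = ip (A u) (V v)"
proof -
  have "ip (A (V u)) v = cnj (ip v (A (V u)))" by (rule herm)
  also have "\<dots> = cnj (ip (V v) (A u))" using hk_adj by simp
  also have "\<dots> = ip (A u) (V v)" by (metis herm)
  finally show ?thesis .
qed

definition Hu where "Hu = wold_unitary_part V"

lemma Hu_subsp: "subsp Hu" unfolding Hu_def wold_unitary_part_def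
  by (rule subsp_Inter) (rule range_subsp[OF iso_pow[OF Vi]])
lemma Hu_closed: "closedH Hu" unfolding Hu_def wold_unitary_part_def
  by (rule closed_Inter) (rule range_closed[OF iso_pow[OF Vi]])

lemma Hu_back: assumes "y \<in> Hu" shows "\<exists>y'\<in>Hu. V y' = y"
proof -
  have "\<forall>n. \<exists>z. y = (V ^^ Suc n) z" using assms unfolding Hu_def wold_unitary_part_def by blast
  then obtain z where z: "\<And>n. y = (V ^^ Suc n) (z n)" by metis
  have eq: "(V ^^ n) (z n) = z 0" for n
    using z[of n] z[of 0] iso_inj[OF Vi] by simp
  have "z 0 \<in> Hu" unfolding Hu_def wold_unitary_part_def using eq by (metis INT_I rangeI)
  moreover have "V (z 0) = y" using z[of 0] by simp
  ultimately show ?thesis by blast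
qed

lemma Hu_fwd: assumes "y \<in> Hu" shows "V y \<in> Hu"
  unfolding Hu_def wold_unitary_part_def
proof
  fix n
  from assms obtain z where "y = (V ^^ n) z" unfolding Hu_def wold_unitary_part_def by blast
  hence "V y = (V ^^ n) (V z)" by (simp add: funpow_swap1)
  thus "V y \<in> range (V ^^ n)" by simp
qed

lemma fix_Hu: assumes "V w = w" shows "w \<in> Hu"
proof -
  have "(V ^^ n) w = w" for n using assms by (induction n) simp_all
  thus ?thesis unfolding Hu_def wold_unitary_part_def by (metis INT_I rangeI)
qed

lemma negfix_Hu: assumes "V w = - w" shows "w \<in> Hu"
proof -
  have "w \<in> range (V ^^ n) \<and> - w \<in> range (V ^^ n)" for n
  proof (induction n)
    case 0 thus ?case by simp
  next
    case (Suc n)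
    then obtain p q where pq: "w = (V ^^ n) p" "- w = (V ^^ n) q" by blast
    have "(V ^^ Suc n) q = V ((V ^^ n) q)" by simp
    also have "\<dots> = w" unfolding pq(2)[symmetric] iso_neg[OF Vi] assms by simp
    finally have "(V ^^ Suc n) q = w" .
    moreover have "(V ^^ Suc n) p = - w" using pq(1) assms by simp
    ultimately show ?case by (metis rangeI)
  qed
  thus ?thesis unfolding Hu_def wold_unitary_part_def by blast
qed

end


context hk begin

definition aa :: "'a \<Rightarrow> nat \<Rightarrow> real" where
  "aa z k = Re (ip (A ((V ^^ k) z)) ((V ^^ k) z))"

lemma aa_pos: assumes "z \<noteq> 0" shows "0 < aa z k"
proof -
  have "(V ^^ k) z \<noteq> 0" using assms iso_inj[OF iso_pow[OF Vi]] iso_0[OF iso_pow[OF Vi]] by metis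
  hence "aa z k \<noteq> 0" unfolding aa_def using B_def0 by blast
  thus ?thesis unfolding aa_def using A_re by (simp add: order_less_le)
qed

lemma aa_bd: obtains K where "\<And>z k. aa z k \<le> K * Re (ip z z)"
proof -
  obtain K where K: "\<And>x. hnorm ip (A x) \<le> K * hnorm ip x" using A_K by blast
  have "aa z k \<le> K * Re (ip z z)" for z k
  proof -
    define w where "w = (V ^^ k) z"
    have "aa z k \<le> cmod (ip (A w) w)" unfolding aa_def w_def by (rule complex_Re_le_cmod)
    also have "\<dots> \<le> hnorm ip (A w) * hnorm ip w" by (rule cs)
    also have "\<dots> \<le> K * hnorm ip w * hnorm ip w" using K[of w] by (rule mult_right_mono) simp
    also have "\<dots> = K * Re (ip w w)" using hn_sq[of w] by (simp add: power2_eq_square mult.assoc)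
    also have "\<dots> = K * Re (ip z z)" unfolding w_def using iso_nsq[OF iso_pow[OF Vi]] by simp
    finally show ?thesis .
  qed
  thus ?thesis using that by blast
qed

lemma aa_lc: "(aa z (Suc k))^2 \<le> aa z k * aa z (Suc (Suc k))"
proof -
  define u where "u = (V ^^ k) z"
  have 1: "aa z (Suc k) = Re (ip (A u) (V (V u)))" unfolding aa_def u_def by (simp add: symV)
  have 2: "aa z k = Re (ip (A u) u)" unfolding aa_def u_def by simp
  have 3: "aa z (Suc (Suc k)) = Re (ip (A (V (V u))) (V (V u)))" unfolding aa_def u_def by simp
  have "(Re (ip (A u) (V (V u))))^2 \<le> (cmod (ip (A u) (V (V u))))^2"
    using abs_Re_le_cmod by (metis power2_abs power_mono abs_ge_zero)
  also have "\<dots> \<le> Re (ip (A u) u) * Re (ip (A (V (V u))) (V (V u)))" by (rule B_cs)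
  finally show ?thesis unfolding 1 2 3 .
qed

lemma aa_shift: "aa ((V ^^ n) z) j = aa z (j + n)"
  unfolding aa_def by (simp add: funpow_add)

lemma aa_const: assumes y: "y \<in> Hu" "y \<noteq> 0" shows "aa y (Suc 0) = aa y 0"
proof -
  obtain K where K: "\<And>z k. aa z k \<le> K * Re (ip z z)" using aa_bd by blast
  have le: "aa y (Suc 0) \<le> aa y 0"
    by (rule seq_noninc[of "aa y", OF aa_pos[OF y(2)] aa_lc K])
  have "\<not> aa y (Suc 0) < aa y 0"
  proof
    assume lt: "aa y (Suc 0) < aa y 0"
    define r where "r = aa y (Suc 0) / aa y 0"
    define C where "C = K * Re (ip y y)"
    have p0: "0 < aa y 0" by (rule aa_pos[OF y(2)])
    have r1: "r < 1" unfolding r_def using lt p0 by simp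
    have C: "aa y 0 \<le> C" unfolding C_def by (rule K)
    have bound: "aa y 0 \<le> r^n * C" for n
    proof -
      obtain z where z: "y = (V ^^ n) z" using y(1) unfolding Hu_def wold_unitary_part_def by blast
      have z0: "z \<noteq> 0" using z y(2) iso_0[OF iso_pow[OF Vi]] by metis
      have bn: "aa z n = aa y 0" using aa_shift[of n z 0] z by simp
      have bsn: "aa z (Suc n) = aa y (Suc 0)" using aa_shift[of n z 1] z by simp
      have "aa z n \<le> (aa z (Suc n) / aa z n)^n * aa z 0"
        by (rule seq_decay[of "aa z", OF aa_pos[OF z0] aa_lc]) simp
      also have "\<dots> = r^n * aa z 0" unfolding bn bsn r_def ..
      also have "\<dots> \<le> r^n * (K * Re (ip z z))"
        using K[of z 0] r1 lt p0 unfolding r_def by (intro mult_left_mono) (simp_all add: aa_pos[OF y(2)] less_imp_le)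
      also have "K * Re (ip z z) = C" unfolding C_def z using iso_nsq[OF iso_pow[OF Vi]] by simp
      finally show ?thesis unfolding bn .
    qed
    have Cp: "0 < C" using C p0 by simp
    obtain n where "r^n < aa y 0 / C" using real_arch_pow_inv[OF divide_pos_pos[OF p0 Cp] r1] by blast
    hence "r^n * C < aa y 0" using Cp by (simp add: pos_less_divide_eq)
    thus False using bound[of n] by simp
  qed
  thus ?thesis using le by simp
qed

lemma core: assumes x: "x \<in> Hu" shows "V (V x) = x"
proof (cases "x = 0")
  case True thus ?thesis using iso_0[OF Vi] by simp
next
  case False
  have Vx: "V x \<in> Hu" "V x \<noteq> 0" using Hu_fwd[OF x] False iso_inj[OF Vi] iso_0[OF Vi] by metis+
  have e01: "aa x (Suc 0) = aa x 0" using aa_const[OF x False] .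
  have e12: "aa x (Suc (Suc 0)) = aa x (Suc 0)"
    using aa_const[OF Vx] aa_shift[of 1 x] by simp
  define p where "p = V (V x)"
  have a0: "aa x 0 = Re (ip (A x) x)" unfolding aa_def by simp
  have a1: "aa x (Suc 0) = Re (ip (A x) p)" unfolding aa_def p_def by (simp add: symV)
  have a2: "aa x (Suc (Suc 0)) = Re (ip (A p) p)" unfolding aa_def p_def by simp
  have c: "Re (ip (A p) x) = Re (ip (A x) p)"
    using A_self[of p x] herm[of p "A x"] by simp
  have "ip (A (p - x)) (p - x) = ip (A p) p - ip (A p) x - ip (A x) p + ip (A x) x"
    by (simp add: A_diff ipdiff ipdiff2)
  hence "Re (ip (A (p - x)) (p - x)) = 0" using a0 a1 a2 c e01 e12 by simp
  hence "p - x = 0" by (rule B_def0)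
  thus ?thesis unfolding p_def by simp
qed

end


context hk begin

lemma Hu_decomp: assumes h: "h \<in> Hu"
  shows "\<exists>p\<in>{h\<in>Hu. V h = h}. \<exists>m\<in>{h\<in>Hu. V h = - h}. h = p + m"
proof -
  define p where "p = scal (1/2) (h + V h)"
  define m where "m = scal (1/2) (h - V h)"
  have Vh: "V h \<in> Hu" by (rule Hu_fwd[OF h])
  have VV: "V (V h) = h" by (rule core[OF h])
  have sub: "subsp Hu" by (rule Hu_subsp)
  have pH: "p \<in> Hu" unfolding p_def using sub h Vh unfolding subsp_def by blast
  have mH: "m \<in> Hu" unfolding m_def using subsp_diff[OF sub h Vh] sub unfolding subsp_def by blast
  have Vp: "V p = p" unfolding p_def by (simp add: iso_scal[OF Vi] iso_add[OF Vi] VV add.commute)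
  have "V m = scal (1/2) (V h - h)" unfolding m_def by (simp add: iso_scal[OF Vi] iso_diff[OF Vi] VV)
  also have "\<dots> = scal (1/2) (- (h - V h))" by simp
  also have "\<dots> = - m" unfolding m_def by (rule sneg)
  finally have Vm: "V m = - m" .
  have "p + m = scal (1/2) ((h + V h) + (h - V h))" unfolding p_def m_def by (simp only: sadd)
  also have "\<dots> = scal (1/2) (scal 2 h)" by (simp add: s2)
  also have "\<dots> = h" by (simp add: sassoc)
  finally have "h = p + m" by simp
  thus ?thesis using pH mH Vp Vm by blast
qed

lemma main_loc:
  shows "(\<forall>x. \<exists>u\<in>wold_pure_part ip V. \<exists>w\<in>wold_unitary_part V. x = u + w)
    \<and> pure_on V (wold_pure_part ip V)
    \<and> V ` (wold_unitary_part V) = wold_unitary_part V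
    \<and> (\<forall>x\<in>wold_unitary_part V. V (V x) = x)
    \<and> (\<forall>x\<in>wold_unitary_part V. \<forall>y\<in>wold_unitary_part V. ip (V x) y = ip x (V y))
    \<and> (\<forall>h\<in>wold_unitary_part V. \<exists>p\<in>{h\<in>wold_unitary_part V. V h = h}. \<exists>m\<in>{h\<in>wold_unitary_part V. V h = - h}. h = p + m)
    \<and> (\<forall>p\<in>{h\<in>wold_unitary_part V. V h = h}. \<forall>m\<in>{h\<in>wold_unitary_part V. V h = - h}. ip p m = 0)
    \<and> A ` (wold_pure_part ip V) \<subseteq> wold_pure_part ip V
    \<and> A ` {h\<in>wold_unitary_part V. V h = h} \<subseteq> {h\<in>wold_unitary_part V. V h = h}
    \<and> A ` {h\<in>wold_unitary_part V. V h = - h} \<subseteq> {h\<in>wold_unitary_part V. V h = - h}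
    \<and> (positive_op ip (A \<circ> V) \<longrightarrow> {h\<in>wold_unitary_part V. V h = - h} = {0} \<and> (\<forall>h\<in>wold_unitary_part V. V h = h))"
proof -
  note HU = Hu_def[symmetric]
  define H0 where "H0 = wold_pure_part ip V"
  have H0: "x \<in> H0 \<longleftrightarrow> (\<forall>y\<in>Hu. ip x y = 0)" for x
    unfolding H0_def wold_pure_part_def orth_compl_def Hu_def by simp
  have sub: "subsp Hu" by (rule Hu_subsp)
  have Hu0: "0 \<in> Hu" using sub unfolding subsp_def by blast
  have P1: "\<forall>x. \<exists>u\<in>H0. \<exists>w\<in>Hu. x = u + w"
  proof
    fix x
    obtain m where m: "m \<in> Hu" "\<forall>y\<in>Hu. ip (x - m) y = 0" using proj[OF Hu_subsp Hu_closed] by blast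
    have "x - m \<in> H0" using m(2) H0 by blast
    thus "\<exists>u\<in>H0. \<exists>w\<in>Hu. x = u + w" using m(1) by (metis diff_add_cancel)
  qed
  have VH0: "V x \<in> H0" if x: "x \<in> H0" for x
  proof -
    have "ip (V x) y = 0" if y: "y \<in> Hu" for y
    proof -
      obtain y' where y': "y' \<in> Hu" "V y' = y" using Hu_back[OF y] by blast
      have "ip (V x) y = ip x y'" using iso_ip[OF Vi] y' by metis
      thus ?thesis using x y' H0 by simp
    qed
    thus ?thesis using H0 by blast
  qed
  have P2: "pure_on V H0"
    unfolding pure_on_def
  proof
    show "V ` H0 \<subseteq> H0" using VH0 by blast
    show "(\<Inter>n. (V ^^ n) ` H0) = {0}"
    proof
      show "(\<Inter>n. (V ^^ n) ` H0) \<subseteq> {0}"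
      proof
        fix z assume z: "z \<in> (\<Inter>n. (V ^^ n) ` H0)"
        hence "z \<in> (V ^^ 0) ` H0" by blast
        hence zH0: "z \<in> H0" by simp
        have "z \<in> Hu" using z unfolding Hu_def wold_unitary_part_def by blast
        hence "ip z z = 0" using zH0 H0 by blast
        thus "z \<in> {0}" using ipdef by simp
      qed
      have "0 \<in> H0" using H0 by simp
      thus "{0} \<subseteq> (\<Inter>n. (V ^^ n) ` H0)" using iso_0[OF iso_pow[OF Vi]] by (metis INT_I image_eqI singletonD subsetI)
    qed
  qed
  have P3: "V ` Hu = Hu" using Hu_fwd Hu_back by blast
  have P5: "\<forall>x\<in>Hu. \<forall>y\<in>Hu. ip (V x) y = ip x (V y)"
  proof (intro ballI)
    fix x y assume "x \<in> Hu" "y \<in> Hu"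
    have "ip (V x) y = ip (V (V x)) (V y)" using iso_ip[OF Vi] by simp
    thus "ip (V x) y = ip x (V y)" using core[OF \<open>y \<in> Hu\<close>] core[OF \<open>x \<in> Hu\<close>] by simp
  qed
  have P7: "\<forall>p\<in>{h\<in>Hu. V h = h}. \<forall>m\<in>{h\<in>Hu. V h = - h}. ip p m = 0"
  proof (intro ballI)
    fix p m assume p: "p \<in> {h\<in>Hu. V h = h}" and m: "m \<in> {h\<in>Hu. V h = - h}"
    have "ip p m = ip (V p) (V m)" using iso_ip[OF Vi] by simp
    also have "\<dots> = - ip p m" using p m by (simp add: ipneg2)
    finally show "ip p m = 0" by simp
  qed
  have AHp: "A p \<in> {h\<in>Hu. V h = h}" if p: "p \<in> {h\<in>Hu. V h = h}" for p
  proof -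
    define w where "w = A p"
    have "ip (V w) w = ip w w" using hk_adj[of w p] p unfolding w_def by simp
    hence "Re (ip (V w - w) (V w - w)) = 0"
      using nsq_diff[of "V w" w] iso_nsq[OF Vi, of w] by simp
    hence "(hnorm ip (V w - w))^2 = 0" using hn_sq by simp
    hence "V w - w = 0" by simp
    hence "V w = w" by simp
    thus ?thesis using fix_Hu unfolding w_def by blast
  qed
  have AHm: "A m \<in> {h\<in>Hu. V h = - h}" if m: "m \<in> {h\<in>Hu. V h = - h}" for m
  proof -
    define w where "w = A m"
    have "ip (V w) w = - ip w w" using hk_adj[of w m] m unfolding w_def by (simp add: A_neg ipneg2)
    hence "Re (ip (V w + w) (V w + w)) = 0"
      using nsq_add[of "V w" w] iso_nsq[OF Vi, of w] by simp
    hence "(hnorm ip (V w + w))^2 = 0" using hn_sq by simp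
    hence "V w + w = 0" by simp
    hence "V w = - w" by (simp add: eq_neg_iff_add_eq_0)
    thus ?thesis using negfix_Hu unfolding w_def by blast
  qed
  have AH0: "A x \<in> H0" if x: "x \<in> H0" for x
  proof -
    have "ip (A x) y = 0" if y: "y \<in> Hu" for y
    proof -
      obtain p m where pm: "p \<in> {h\<in>Hu. V h = h}" "m \<in> {h\<in>Hu. V h = - h}" "y = p + m"
        using Hu_decomp[OF y] by blast
      have "ip (A x) y = ip x (A p) + ip x (A m)" using pm(3) A_self by (simp add: ipadd2)
      moreover have "ip x (A p) = 0" using AHp[OF pm(1)] x H0 by blast
      moreover have "ip x (A m) = 0" using AHm[OF pm(2)] x H0 by blast
      ultimately show ?thesis by simp
    qed
    thus ?thesis using H0 by blast
  qed
  have P9: "positive_op ip (A \<circ> V) \<longrightarrow> {h\<in>Hu. V h = - h} = {0} \<and> (\<forall>h\<in>Hu. V h = h)"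
  proof
    assume pos: "positive_op ip (A \<circ> V)"
    have m0: "m = 0" if m: "m \<in> {h\<in>Hu. V h = - h}" for m
    proof -
      have "0 \<le> Re (ip ((A \<circ> V) m) m)" using pos unfolding positive_op_def by blast
      hence "Re (ip (A m) m) \<le> 0" using m by (simp add: A_neg ipneg)
      hence "Re (ip (A m) m) = 0" using A_re[of m] by simp
      thus ?thesis by (rule B_def0)
    qed
    have "0 \<in> {h\<in>Hu. V h = - h}" using Hu0 iso_0[OF Vi] by simp
    hence Hm: "{h\<in>Hu. V h = - h} = {0}" using m0 by blast
    have "\<forall>h\<in>Hu. V h = h"
    proof
      fix h assume h: "h \<in> Hu"
      obtain p m where pm: "p \<in> {h\<in>Hu. V h = h}" "m \<in> {h\<in>Hu. V h = - h}" "h = p + m"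
        using Hu_decomp[OF h] by blast
      thus "V h = h" using m0[OF pm(2)] by simp
    qed
    thus "{h\<in>Hu. V h = - h} = {0} \<and> (\<forall>h\<in>Hu. V h = h)" using Hm by blast
  qed
  have P4: "\<forall>x\<in>Hu. V (V x) = x" using core by blast
  have P6: "\<forall>h\<in>Hu. \<exists>p\<in>{h\<in>Hu. V h = h}. \<exists>m\<in>{h\<in>Hu. V h = - h}. h = p + m"
    using Hu_decomp by blast
  have P8a: "A ` H0 \<subseteq> H0" using AH0 by blast
  have P8b: "A ` {h\<in>Hu. V h = h} \<subseteq> {h\<in>Hu. V h = h}" using AHp by blast
  have P8c: "A ` {h\<in>Hu. V h = - h} \<subseteq> {h\<in>Hu. V h = - h}" using AHm by blast
  show ?thesis unfolding H0_def[symmetric] HU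
    apply (intro conjI)
    apply (fact P1)
    apply (fact P2)
    apply (fact P3)
    apply (fact P4)
    apply (fact P5)
    apply (fact P6)
    apply (fact P7)
    apply (fact P8a)
    apply (fact P8b)
    apply (fact P8c)
    apply (fact P9)
    done
qed

end

theorem mainTheorem6:
  fixes scal :: "complex \<Rightarrow> 'a::ab_group_add \<Rightarrow> 'a"
    and ip :: "'a \<Rightarrow> 'a \<Rightarrow> complex"
    and A V :: "'a \<Rightarrow> 'a"
  assumes H: "complex_separable_hilbert scal ip"
    and A_bdd: "bounded_op scal ip A"
    and A_pos: "positive_op ip A"
    and V_iso: "isometry_op scal ip V"
    and hankel: "\<forall>x. adjoint_op ip V (A x) = A (V x)"
  defines "H0 \<equiv> wold_pure_part ip V"
    and "H' \<equiv> wold_unitary_part V"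
    and "Hp \<equiv> {h\<in>wold_unitary_part V. V h = h}"
    and "Hm \<equiv> {h\<in>wold_unitary_part V. V h = - h}"
  shows "(\<forall>x. \<exists>u\<in>H0. \<exists>w\<in>H'. x = u + w)
    \<and> pure_on V H0
    \<and> V ` H' = H'
    \<and> (\<forall>x\<in>H'. V (V x) = x)
    \<and> (\<forall>x\<in>H'. \<forall>y\<in>H'. ip (V x) y = ip x (V y))
    \<and> (\<forall>h\<in>H'. \<exists>p\<in>Hp. \<exists>m\<in>Hm. h = p + m)
    \<and> (\<forall>p\<in>Hp. \<forall>m\<in>Hm. ip p m = 0)
    \<and> A ` H0 \<subseteq> H0 \<and> A ` Hp \<subseteq> Hp \<and> A ` Hm \<subseteq> Hm
    \<and> (positive_op ip (A \<circ> V) \<longrightarrow> Hm = {0} \<and> (\<forall>h\<in>H'. V h = h))"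
proof -
  interpret hk scal ip A V
    by (intro hk.intro hk_axioms.intro hs.intro) (fact H A_bdd A_pos V_iso hankel)+
  show ?thesis unfolding H0_def H'_def Hp_def Hm_def by (rule main_loc)
qed

end
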